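(* Let $\alpha \ge 1$ and let $\mathcal{F}$ be a $k$-uniform hypergraph on $[n]$. Let $\mathcal{P}_{\mathcal{F}}$ be the partition of $[n]$ into the equivalence classes of the relation in which $i \sim j$ if and only if $i=j$ or the transposition $(ij)$ is an automorphism of $\mathcal{F}$. Then there is $\vec{w}\in\mathbb{R}^n$ with $\|\vec{w}\|_\alpha = 1$ and $w_t \ge 0$ for all $1\le t\le n$ such that $\tau_{\mathcal{F}}(\vec{w},\dots,\vec{w}) = \lambda_\alpha(\mathcal{F})$ and $\vec{w}$ is constant on each part of $\mathcal{P}_{\mathcal{F}}$.
   Context: For a $k$-uniform hypergraph $\mathcal{F}$ on $[n]$ and $x\in\mathbb{R}^n$, $\tau_{\mathcal{F}}(x,\dots,x) = k!\sum_{\{i_1,\dots,i_k\}\in E(\mathcal{F})}x_{i_1}\cdots x_{i_k}$, and $\lambda_\alpha(\mathcal{F}) = \max\{\tau_{\mathcal{F}}(x,\dots,x) : \|x\|_\alpha = 1\}$ where $\|x\|_\alpha = (\sum_i|x_i|^\alpha)^{1/\alpha}$. *)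

theory Defs
  imports "HOL-Analysis.Analysis" "HOL-Combinatorics.Transposition"
begin

definition k_uniform :: "nat \<Rightarrow> 'v set set \<Rightarrow> bool" where
  "k_uniform k F \<longleftrightarrow> (\<forall>e\<in>F. card e = k)"

definition tau :: "nat \<Rightarrow> 'v set set \<Rightarrow> ('v \<Rightarrow> real) \<Rightarrow> real" where
  "tau k F x = fact k * (\<Sum>e\<in>F. \<Prod>i\<in>e. x i)"

definition anorm :: "real \<Rightarrow> ('v::finite \<Rightarrow> real) \<Rightarrow> real" where
  "anorm \<alpha> x = (\<Sum>i\<in>UNIV. \<bar>x i\<bar> powr \<alpha>) powr (1 / \<alpha>)"

(* lambda_alpha(F) = max { tau_F(x) : ||x||_alpha = 1 } (written as Sup; the maximum is attained) *)
definition lambda_alpha :: "real \<Rightarrow> nat \<Rightarrow> ('v::finite) set set \<Rightarrow> real" where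
  "lambda_alpha \<alpha> k F = Sup {tau k F x | x. anorm \<alpha> x = 1}"

definition transp_aut :: "'v set set \<Rightarrow> 'v \<Rightarrow> 'v \<Rightarrow> bool" where
  "transp_aut F i j \<longleftrightarrow> (\<lambda>e. Transposition.transpose i j ` e) ` F = F"

definition sim_rel :: "'v set set \<Rightarrow> 'v \<Rightarrow> 'v \<Rightarrow> bool" where
  "sim_rel F i j \<longleftrightarrow> i = j \<or> transp_aut F i j"

end

theory Submission
  imports Defs
begin

lemma pmean_ge:
  fixes a b \<alpha> :: real
  assumes "a \<ge> 0" "b \<ge> 0" "\<alpha> \<ge> 1"
  shows "(a + b) / 2 \<le> ((a powr \<alpha> + b powr \<alpha>) / 2) powr (1 / \<alpha>)"
proof -
  have key: "((a + b) / 2) powr \<alpha> \<le> (a powr \<alpha> + b powr \<alpha>) / 2"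
  proof (cases "a = 0 \<or> b = 0")
    case True
    have h2: "2 powr \<alpha> \<ge> 2 powr 1" using assms by (intro powr_mono) auto
    have "\<And>c::real. c \<ge> 0 \<Longrightarrow> (c/2) powr \<alpha> \<le> c powr \<alpha> / 2"
    proof -
      fix c :: real assume c: "c \<ge> 0"
      have "(c/2) powr \<alpha> = c powr \<alpha> / 2 powr \<alpha>" using c by (simp add: powr_divide)
      also have "\<dots> \<le> c powr \<alpha> / 2" using h2 by (intro divide_left_mono) auto
      finally show "(c/2) powr \<alpha> \<le> c powr \<alpha> / 2" .
    qed
    then show ?thesis using True assms by auto
  next
    case False
    then have "a > 0" "b > 0" using assms by auto
    from convex_onD[OF powr_convex[OF assms(3)], of "1/2" a b] this
    show ?thesis by (simp add: field_simps)
  qed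
  have "(a + b) / 2 = (((a + b) / 2) powr \<alpha>) powr (1 / \<alpha>)"
    using assms by (simp add: powr_powr)
  also have "\<dots> \<le> ((a powr \<alpha> + b powr \<alpha>) / 2) powr (1 / \<alpha>)"
    using key assms by (intro powr_mono2) auto
  finally show ?thesis .
qed

lemma prod_split2:
  fixes f :: "'v \<Rightarrow> real"
  assumes "finite e" "i \<noteq> j"
  shows "prod f e = (if i \<in> e then f i else 1) * (if j \<in> e then f j else 1) * prod f (e - {i, j})"
proof -
  have "e = (e \<inter> {i,j}) \<union> (e - {i,j})" by auto
  then have "prod f e = prod f (e \<inter> {i,j}) * prod f (e - {i,j})"
    using assms by (metis Diff_disjoint Int_Diff_disjoint finite_Diff finite_Int prod.union_disjoint)
  moreover have "prod f (e \<inter> {i,j}) = (if i \<in> e then f i else 1) * (if j \<in> e then f j else 1)"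
    using assms by (cases "i \<in> e"; cases "j \<in> e") (auto simp: Int_insert_right)
  ultimately show ?thesis by simp
qed

lemma sum_split2:
  fixes f :: "'v::finite \<Rightarrow> real"
  assumes "i \<noteq> j"
  shows "sum f UNIV = f i + f j + sum f (UNIV - {i, j})"
proof -
  have "sum f UNIV = sum f {i,j} + sum f (UNIV - {i,j})"
    by (metis add.commute finite subset_UNIV sum.subset_diff)
  then show ?thesis using assms by simp
qed

lemma edge_ineq:
  fixes x :: "'v \<Rightarrow> real"
  assumes "finite e" "i \<noteq> j" "\<forall>t. x t \<ge> 0" "m \<ge> 0" "2 * m \<ge> x i + x j" "m * m \<ge> x i * x j"
  shows "(\<Prod>t\<in>e. x t) + (\<Prod>t\<in>e. x (Transposition.transpose i j t)) \<le> 2 * (\<Prod>t\<in>e. (x(i:=m, j:=m)) t)"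
proof -
  define R where "R = prod x (e - {i,j})"
  have R0: "R \<ge> 0" unfolding R_def using assms by (simp add: prod_nonneg)
  have R1: "prod (\<lambda>t. x (Transposition.transpose i j t)) (e - {i,j}) = R" unfolding R_def
    by (rule prod.cong) auto
  have R2: "prod (x(i:=m, j:=m)) (e - {i,j}) = R" unfolding R_def
    by (rule prod.cong) auto
  have a: "x i \<ge> 0" "x j \<ge> 0" using assms by auto
  show ?thesis
    unfolding prod_split2[OF assms(1,2), of x] prod_split2[OF assms(1,2), of "\<lambda>t. x (Transposition.transpose i j t)"]
      prod_split2[OF assms(1,2), of "x(i:=m, j:=m)"] R1 R2 R_def[symmetric]
    using assms(2,5,6) R0 a
    by (cases "i \<in> e"; cases "j \<in> e") (auto simp: algebra_simps intro: mult_right_mono[of _ _ R, simplified],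
      (metis distrib_left mult_left_mono mult.commute)+)
qed

lemma sum_swap:
  fixes x :: "'v \<Rightarrow> real"
  assumes "transp_aut F i j"
  shows "(\<Sum>e\<in>F. \<Prod>t\<in>e. x t) = (\<Sum>e\<in>F. \<Prod>t\<in>e. x (Transposition.transpose i j t))"
proof -
  let ?T = "Transposition.transpose i j"
  have inj: "inj_on (\<lambda>e. ?T ` e) F"
    by (rule inj_onI) (simp add: inj_image_eq_iff inj_transpose)
  have "(\<Sum>e\<in>F. \<Prod>t\<in>e. x t) = (\<Sum>e\<in>(\<lambda>e. ?T ` e) ` F. \<Prod>t\<in>e. x t)"
    using assms unfolding transp_aut_def by simp
  also have "\<dots> = (\<Sum>e\<in>F. \<Prod>t\<in>?T ` e. x t)"
    by (rule sum.reindex[OF inj, unfolded comp_def])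
  also have "\<dots> = (\<Sum>e\<in>F. \<Prod>t\<in>e. x (?T t))"
    by (rule sum.cong) (auto simp: prod.reindex[OF inj_on_transpose])
  finally show ?thesis .
qed

lemma tau_abs:
  fixes x :: "'v \<Rightarrow> real"
  shows "tau k F x \<le> tau k F (\<lambda>t. \<bar>x t\<bar>)"
  unfolding tau_def
proof (rule mult_left_mono)
  show "(\<Sum>e\<in>F. prod x e) \<le> (\<Sum>e\<in>F. \<Prod>i\<in>e. \<bar>x i\<bar>)"
    by (rule sum_mono) (metis abs_ge_self abs_prod)
qed simp

lemma N_anorm:
  fixes x :: "'v::finite \<Rightarrow> real"
  assumes "\<alpha> \<ge> 1"
  shows "anorm \<alpha> x = 1 \<longleftrightarrow> (\<Sum>t\<in>UNIV. \<bar>x t\<bar> powr \<alpha>) = 1"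
proof -
  define N where "N = (\<Sum>t\<in>UNIV. \<bar>x t\<bar> powr \<alpha>)"
  have N0: "N \<ge> 0" unfolding N_def by (simp add: sum_nonneg)
  have "N powr (1/\<alpha>) = 1 \<longleftrightarrow> N = 1"
  proof
    assume h: "N powr (1/\<alpha>) = 1"
    then have "N \<noteq> 0" by auto
    have "N = (N powr (1/\<alpha>)) powr \<alpha>" using assms N0 by (simp add: powr_powr)
    then show "N = 1" using h by simp
  qed simp
  then show ?thesis unfolding anorm_def N_def by simp
qed

lemma sqrt_strict:
  fixes a b m :: real
  assumes "a \<ge> 0" "b \<ge> 0" "a \<noteq> b" "2 * m \<ge> a + b"
  shows "sqrt a + sqrt b < 2 * sqrt m"
proof -
  define p q where "p = sqrt a" "q = sqrt b"
  have pq: "p \<ge> 0" "q \<ge> 0" "p \<noteq> q" "a = p^2" "b = q^2" using assms unfolding p_q_def by auto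
  have "((p + q)/2)^2 < (a + b)/2"
  proof -
    have "(p - q)^2 > 0" using pq by auto
    then show ?thesis using pq by (simp add: power2_eq_square algebra_simps)
  qed
  then have "(p+q)/2 < sqrt ((a+b)/2)" by (rule real_less_rsqrt)
  also have "\<dots> \<le> sqrt m" using assms by simp
  finally show ?thesis unfolding p_q_def by simp
qed

lemma cont_coord: "continuous_on S (\<lambda>x::'v \<Rightarrow> real. x t)"
  by (rule continuous_on_subset[OF continuous_on_product_coordinates]) simp

lemma cont_tau: "continuous_on S (\<lambda>x::'v \<Rightarrow> real. tau k F x)"
  unfolding tau_def by (intro continuous_intros cont_coord)

theorem corollary12:
  fixes F :: "('v::finite) set set" and k :: nat and \<alpha> :: real
  assumes "\<alpha> \<ge> 1" and "k_uniform k F"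
  shows "\<exists>w :: 'v \<Rightarrow> real. anorm \<alpha> w = 1 \<and> (\<forall>t. w t \<ge> 0)
           \<and> tau k F w = lambda_alpha \<alpha> k F
           \<and> (\<forall>i j. sim_rel F i j \<longrightarrow> w i = w j)"
proof -
  have a0: "\<alpha> > 0" using assms by simp
  define N where "N = (\<lambda>x::'v \<Rightarrow> real. \<Sum>t\<in>UNIV. \<bar>x t\<bar> powr \<alpha>)"
  define S1 where "S1 = (Pi UNIV (\<lambda>_. {0..1::real}) :: ('v \<Rightarrow> real) set)"
  have cS1: "compact S1"
  proof -
    have "compactin (product_topology (\<lambda>_. euclidean) UNIV) (PiE UNIV (\<lambda>_::'v. {0..1::real}))"
      by (simp add: compactin_PiE)
    then show ?thesis unfolding S1_def euclidean_product_topology PiE_UNIV_domain by simp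
  qed
  have cN: "continuous_on S (N :: ('v \<Rightarrow> real) \<Rightarrow> real)" for S
    unfolding N_def using a0
    by (intro continuous_intros continuous_on_powr' cont_coord) auto
  define K0 where "K0 = {x \<in> S1. N x = 1}"
  have cK0: "compact K0"
    unfolding K0_def
    by (rule closed_Int_compact[of "{x. N x = 1}" S1, simplified Int_def, simplified, 
          unfolded conj_commute[of "_ = 1"]])
      (auto intro!: cS1 continuous_closed_preimage_constant[of UNIV N, simplified] cN)
  obtain v0 :: 'v where True by simp
  define e0 where "e0 = (\<lambda>t::'v. if t = v0 then 1 else (0::real))"
  have "N e0 = 1"
  proof -
    have "N e0 = (\<Sum>t\<in>UNIV. if t = v0 then 1 else 0)"
      unfolding N_def e0_def using a0 by (intro sum.cong) auto
    then show ?thesis by simp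
  qed
  then have e0K: "e0 \<in> K0" unfolding K0_def S1_def e0_def by auto
  obtain w0 where w0: "w0 \<in> K0" "\<And>y. y \<in> K0 \<Longrightarrow> tau k F y \<le> tau k F w0"
    using continuous_attains_sup[OF cK0 _ cont_tau, of k F] e0K by blast
  have nonneg_le1: "x t \<le> 1" if "\<forall>t. x t \<ge> 0" "N x = 1" for x :: "'v \<Rightarrow> real" and t
  proof (rule ccontr)
    assume "\<not> x t \<le> 1"
    then have "1 < x t powr \<alpha>" using a0 powr_less_mono2[of \<alpha> 1 "x t"] by simp
    also have "\<dots> = \<bar>x t\<bar> powr \<alpha>" using that by simp
    also have "\<dots> \<le> N x" unfolding N_def by (rule member_le_sum) auto
    finally show False using that by simp
  qed
  have bound: "tau k F x \<le> tau k F w0" if "anorm \<alpha> x = 1" for x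
  proof -
    have Nx: "N (\<lambda>t. \<bar>x t\<bar>) = 1" using that N_anorm[OF assms(1), of x] unfolding N_def by simp
    have "(\<lambda>t. \<bar>x t\<bar>) \<in> K0" unfolding K0_def S1_def using Nx nonneg_le1[OF _ Nx] by auto
    then show ?thesis using tau_abs[of k F x] w0(2) by fastforce
  qed
  have AN: "anorm \<alpha> x = 1 \<longleftrightarrow> N x = 1" for x using N_anorm[OF assms(1), of x] unfolding N_def by simp
  have w0n: "anorm \<alpha> w0 = 1" using w0(1) AN unfolding K0_def by simp
  have lam: "lambda_alpha \<alpha> k F = tau k F w0"
    unfolding lambda_alpha_def by (rule cSup_eq_maximum) (use w0n bound in auto)
  define K where "K = {x \<in> K0. tau k F x = tau k F w0}"
  have cK: "compact K" unfolding K_def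
    by (rule compact_Int_closed[of K0 "{x. tau k F x = tau k F w0}", simplified Int_def, simplified])
      (auto intro!: cK0 continuous_closed_preimage_constant[of UNIV "tau k F", simplified] cont_tau)
  define \<Psi> where "\<Psi> = (\<lambda>x::'v \<Rightarrow> real. \<Sum>t\<in>UNIV. sqrt (x t))"
  have cPsi: "continuous_on K \<Psi>" unfolding \<Psi>_def by (intro continuous_intros cont_coord)
  obtain w where w: "w \<in> K" "\<And>y. y \<in> K \<Longrightarrow> \<Psi> y \<le> \<Psi> w"
    using continuous_attains_sup[OF cK _ cPsi] w0(1) unfolding K_def by blast
  have wK0: "w \<in> K0" "tau k F w = tau k F w0" using w(1) unfolding K_def by auto
  have wpos: "\<forall>t. w t \<ge> 0" and Nw: "N w = 1" using wK0(1) unfolding K0_def S1_def by auto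
  have Nsplit: "N x = \<bar>x i\<bar> powr \<alpha> + \<bar>x j\<bar> powr \<alpha> + (\<Sum>t\<in>UNIV - {i,j}. \<bar>x t\<bar> powr \<alpha>)"
    if "i \<noteq> j" for x i j unfolding N_def by (rule sum_split2[OF that])
  have symw: "w i = w j" if "sim_rel F i j" for i j
  proof (rule ccontr)
    assume ne: "w i \<noteq> w j"
    then have ij: "i \<noteq> j" and aut: "transp_aut F i j" using that unfolding sim_rel_def by auto
    define a b where "a = w i" "b = w j"
    have ab: "a \<ge> 0" "b \<ge> 0" "a \<noteq> b" using wpos ne unfolding a_b_def by auto
    define s where "s = (a powr \<alpha> + b powr \<alpha>) / 2"
    define m where "m = s powr (1/\<alpha>)"
    have s0: "s \<ge> 0" unfolding s_def by simp
    have mpow: "m powr \<alpha> = s" unfolding m_def using a0 s0 by (simp add: powr_powr)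
    have mge: "(a+b)/2 \<le> m" unfolding m_def s_def by (rule pmean_ge[OF ab(1,2) assms(1)])
    have m0: "m \<ge> 0" unfolding m_def by simp
    have "a * b \<le> ((a+b)/2) * ((a+b)/2)"
    proof -
      have "0 \<le> (a - b)^2" by simp
      then show ?thesis by (simp add: power2_eq_square algebra_simps)
    qed
    also have "\<dots> \<le> m * m" using mge ab by (intro mult_mono) auto
    finally have mm: "a * b \<le> m * m" .
    define w' where "w' = w(i:=m, j:=m)"
    have rest: "(\<Sum>t\<in>UNIV - {i,j}. \<bar>w' t\<bar> powr \<alpha>) = (\<Sum>t\<in>UNIV - {i,j}. \<bar>w t\<bar> powr \<alpha>)"
      unfolding w'_def by (rule sum.cong) auto
    have rest0: "(\<Sum>t\<in>UNIV - {i,j}. \<bar>w t\<bar> powr \<alpha>) \<ge> 0" by (simp add: sum_nonneg)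
    have Nw_ab: "N w = a powr \<alpha> + b powr \<alpha> + (\<Sum>t\<in>UNIV - {i,j}. \<bar>w t\<bar> powr \<alpha>)"
      using Nsplit[OF ij, of w] ab unfolding a_b_def by simp
    have Nw': "N w' = 1"
      using Nsplit[OF ij, of w'] rest Nw_ab Nw ij m0 mpow unfolding w'_def s_def by simp
    have s1: "s \<le> 1" using Nw_ab Nw rest0 unfolding s_def by simp
    have m1: "m \<le> 1" unfolding m_def using s0 s1 a0 powr_mono2[of "1/\<alpha>" s 1] by simp
    have w'S1: "w' \<in> S1" unfolding S1_def w'_def using m0 m1 wK0(1) unfolding K0_def S1_def by auto
    have an': "anorm \<alpha> w' = 1" using AN Nw' by simp
    let ?P = "\<lambda>x::'v \<Rightarrow> real. (\<Sum>e\<in>F. \<Prod>t\<in>e. x t)"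
    have "?P w + ?P w = (\<Sum>e\<in>F. (\<Prod>t\<in>e. w t) + (\<Prod>t\<in>e. w (Transposition.transpose i j t)))"
      using sum_swap[OF aut, of w] by (simp add: sum.distrib)
    also have "\<dots> \<le> (\<Sum>e\<in>F. 2 * (\<Prod>t\<in>e. w' t))"
      unfolding w'_def
      by (rule sum_mono, rule edge_ineq) (use ij wpos m0 mge mm a_b_def in auto)
    also have "\<dots> = 2 * ?P w'" by (simp add: sum_distrib_left)
    finally have "?P w \<le> ?P w'" by simp
    then have "tau k F w \<le> tau k F w'" unfolding tau_def by (intro mult_left_mono) auto
    moreover have "tau k F w' \<le> tau k F w0" using bound an' by simp
    ultimately have "tau k F w' = tau k F w0" using wK0(2) by simp
    then have w'K: "w' \<in> K" unfolding K_def K0_def using w'S1 Nw' by simp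
    have "\<Psi> w = sqrt a + sqrt b + (\<Sum>t\<in>UNIV - {i,j}. sqrt (w t))"
      unfolding \<Psi>_def a_b_def by (rule sum_split2[OF ij])
    also have "\<dots> < 2 * sqrt m + (\<Sum>t\<in>UNIV - {i,j}. sqrt (w t))"
      using sqrt_strict[OF ab, of m] mge by simp
    also have "\<dots> = \<Psi> w'"
    proof -
      have "(\<Sum>t\<in>UNIV - {i,j}. sqrt (w' t)) = (\<Sum>t\<in>UNIV - {i,j}. sqrt (w t))"
        unfolding w'_def by (rule sum.cong) auto
      then show ?thesis unfolding \<Psi>_def sum_split2[OF ij, of "\<lambda>t. sqrt (w' t)"]
        using ij unfolding w'_def by simp
    qed
    finally show False using w(2)[OF w'K] by simp
  qed
  show ?thesis
  proof (intro exI conjI allI impI)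
    show "anorm \<alpha> w = 1" using AN Nw by simp
    show "tau k F w = lambda_alpha \<alpha> k F" using wK0(2) lam by simp
  qed (use wpos symw in auto)
qed
end
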